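(* Let $IS\in\{\Box,\blacksquare\}^2$ and let $\tau$ be a correct compositional translation from $\mathrm{SYNCSIMPLE}$ into $\mathrm{LOCKSIMPLE}_{2,IS}$ of blocking type $(P_1,P_2)$. Then $IS=(\blacksquare,\blacksquare)$, $\tau(!)$ has a prefix in $\{P_2,T_2\}^*P_1$, and $\tau(?)$ has a prefix in $\{P_1,T_1\}^*P_2$.
   Context: $\mathrm{SYNCSIMPLE}$: subprocesses $\mathcal{U} ::= \checkmark \mid 0 \mid\, !\mathcal{U} \mid\, ?\mathcal{U}$; processes are finite parallel compositions ($\mid$ associative, commutative, $0$ a unit). Reduction: $!\mathcal{U}_1\mid ?\mathcal{U}_2\mid \mathcal{P}\to \mathcal{U}_1\mid\mathcal{U}_2\mid\mathcal{P}$. Successful: of form $\checkmark\mid\mathcal{P}$; may-convergent: reduces to a successful process; must-convergent: every reachable process is may-convergent. $\mathrm{LOCKSIMPLE}_{k,IS}$ ($IS\in\{\Box,\blacksquare\}^k$, $\Box$ empty, $\blacksquare$ full): subprocesses are words over $\{P_1,T_1,\dots,P_k,T_k\}$ followed by $0$ or $\checkmark$; states $(\mathcal{P},C)$ reduce by $(P_i\mathcal{U}\mid\mathcal{P},C)\to(\mathcal{U}\mid\mathcal{P},C[C_i:=\blacksquare])$ only if $C_i=\Box$, and $(T_i\mathcal{U}\mid\mathcal{P},C)\to(\mathcal{U}\mid\mathcal{P},C[C_i:=\Box])$ always. Success = process contains $\checkmark$; a process $\mathcal{P}$ is may/must-convergent iff the state $(\mathcal{P},IS)$ is. A compositional translation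 $\tau$ is given by words $\tau(!),\tau(?)$ with $\tau(0)=0$, $\tau(\checkmark)=\checkmark$, $\tau(!\mathcal{U})=\tau(!)\tau(\mathcal{U})$, $\tau(?\mathcal{U})=\tau(?)\tau(\mathcal{U})$, $\tau$ commuting with $\mid$; correct = preserves and reflects may- and must-convergence. Blocking type of a word $S$: execute $S$ alone from $IS$; if it gets stuck at an occurrence of $P_i$ that is the first symbol from $\{P_i,T_i\}$ in $S$ the type is $P_i$, if stuck at a later occurrence of $P_i$ the type is $P_iP_i$; $\tau$ has blocking type $(W_1,W_2)$ if $\tau(!)$ has type $W_1$ and $\tau(?)$ type $W_2$. $X^*$ denotes finite words over a symbol set $X$. *)

theory Defs
  imports Main "HOL-Library.Multiset"
begin

datatype ssub = Check | Zero | Send ssub | Recv ssub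

type_synonym sproc = "ssub multiset"

inductive sstep :: "sproc \<Rightarrow> sproc \<Rightarrow> bool" where
  "sstep ({#Send u1, Recv u2#} + Pr) ({#u1, u2#} + Pr)"

definition s_successful :: "sproc \<Rightarrow> bool" where
  "s_successful Pr \<longleftrightarrow> Check \<in># Pr"

definition s_may :: "sproc \<Rightarrow> bool" where
  "s_may Pr \<longleftrightarrow> (\<exists>Q. sstep\<^sup>*\<^sup>* Pr Q \<and> s_successful Q)"

definition s_must :: "sproc \<Rightarrow> bool" where
  "s_must Pr \<longleftrightarrow> (\<forall>Q. sstep\<^sup>*\<^sup>* Pr Q \<longrightarrow> s_may Q)"

text \<open>Lock symbols P_i and T_i (indices 1..k). Lock states are lists of booleans,
  True = full, False = empty; lock i is the (i-1)-th entry.\<close>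

datatype lsym = LP nat | LT nat

definition lock_alphabet :: "nat \<Rightarrow> lsym set" where
  "lock_alphabet k = {LP i | i. 1 \<le> i \<and> i \<le> k} \<union> {LT i | i. 1 \<le> i \<and> i \<le> k}"

text \<open>A subprocess: a word followed by 0 (False) or the success symbol (True).\<close>
type_synonym lsub = "lsym list \<times> bool"
type_synonym lproc = "lsub multiset"
type_synonym lstate = "lproc \<times> bool list"

inductive lstep :: "lstate \<Rightarrow> lstate \<Rightarrow> bool" where
  lstep_P: "\<not> C ! (i - 1) \<Longrightarrow>
     lstep (add_mset (LP i # w, b) Pr, C) (add_mset (w, b) Pr, C[i - 1 := True])"
| lstep_T: "lstep (add_mset (LT i # w, b) Pr, C) (add_mset (w, b) Pr, C[i - 1 := False])"

definition l_successful :: "lstate \<Rightarrow> bool" where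
  "l_successful S \<longleftrightarrow> ([], True) \<in># fst S"

definition l_may :: "lstate \<Rightarrow> bool" where
  "l_may S \<longleftrightarrow> (\<exists>S'. lstep\<^sup>*\<^sup>* S S' \<and> l_successful S')"

definition l_must :: "lstate \<Rightarrow> bool" where
  "l_must S \<longleftrightarrow> (\<forall>S'. lstep\<^sup>*\<^sup>* S S' \<longrightarrow> l_may S')"

fun tr_sub :: "lsym list \<Rightarrow> lsym list \<Rightarrow> ssub \<Rightarrow> lsub" where
  "tr_sub ws wr Check = ([], True)"
| "tr_sub ws wr Zero = ([], False)"
| "tr_sub ws wr (Send u) = (ws @ fst (tr_sub ws wr u), snd (tr_sub ws wr u))"
| "tr_sub ws wr (Recv u) = (wr @ fst (tr_sub ws wr u), snd (tr_sub ws wr u))"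

definition tr_proc :: "lsym list \<Rightarrow> lsym list \<Rightarrow> sproc \<Rightarrow> lproc" where
  "tr_proc ws wr Pr = image_mset (tr_sub ws wr) Pr"

text \<open>The translation with tau(!) = ws, tau(?) = wr into LOCKSIMPLE_{k,IS} is correct.\<close>
definition correct_translation :: "nat \<Rightarrow> bool list \<Rightarrow> lsym list \<Rightarrow> lsym list \<Rightarrow> bool" where
  "correct_translation k IS ws wr \<longleftrightarrow>
     length IS = k \<and> set ws \<subseteq> lock_alphabet k \<and> set wr \<subseteq> lock_alphabet k \<and>
     (\<forall>Pr. (s_may Pr \<longleftrightarrow> l_may (tr_proc ws wr Pr, IS)) \<and>
           (s_must Pr \<longleftrightarrow> l_must (tr_proc ws wr Pr, IS)))"

fun stuck_pos :: "bool list \<Rightarrow> lsym list \<Rightarrow> nat \<Rightarrow> nat option" where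
  "stuck_pos C [] n = None"
| "stuck_pos C (LP i # w) n =
     (if C ! (i - 1) then Some n else stuck_pos (C[i - 1 := True]) w (Suc n))"
| "stuck_pos C (LT i # w) n = stuck_pos (C[i - 1 := False]) w (Suc n)"

datatype btype = BP nat | BPP nat

definition blocking_type :: "bool list \<Rightarrow> lsym list \<Rightarrow> btype option" where
  "blocking_type IS S =
     (case stuck_pos IS S 0 of
        None \<Rightarrow> None
      | Some j \<Rightarrow> (case S ! j of
          LP i \<Rightarrow> Some (if (\<forall>x\<in>set (take j S). x \<noteq> LP i \<and> x \<noteq> LT i) then BP i else BPP i)
        | LT i \<Rightarrow> None))"

end

theory Submission
  imports Defs
begin

lemma sp: "stuck_pos C w n = Some m \<Longrightarrow> n \<le> m \<and> m - n < length w \<and>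
  (case w!(m-n) of LP i \<Rightarrow> ((\<forall>x\<in>set (take (m-n) w). \<forall>j. (x = LP j \<or> x = LT j) \<longrightarrow> j-1 \<noteq> i-1) \<longrightarrow> C!(i-1)) | LT i \<Rightarrow> False)"
proof (induction w arbitrary: C n)
  case Nil then show ?case by simp
next
  case (Cons a w)
  show ?case
  proof (cases a)
    case (LP k)
    show ?thesis
    proof (cases "C ! (k-1)")
      case True with Cons.prems LP show ?thesis by simp
    next
      case False
      with Cons.prems LP have h: "stuck_pos (C[k - 1 := True]) w (Suc n) = Some m" by simp
      from Cons.IH[OF h] have ih: "Suc n \<le> m" "m - Suc n < length w" and
        c: "(case w!(m-Suc n) of LP i \<Rightarrow> ((\<forall>x\<in>set (take (m-Suc n) w). \<forall>j. (x = LP j \<or> x = LT j) \<longrightarrow> j-1 \<noteq> i-1) \<longrightarrow> (C[k - 1 := True])!(i-1)) | LT i \<Rightarrow> False)" by auto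
      have e: "m - n = Suc (m - Suc n)" using ih by simp
      show ?thesis using ih c unfolding e LP
        by (auto split: lsym.splits simp: nth_list_update_neq)
    qed
  next
    case (LT k)
    with Cons.prems have h: "stuck_pos (C[k - 1 := False]) w (Suc n) = Some m" by simp
    from Cons.IH[OF h] have ih: "Suc n \<le> m" "m - Suc n < length w" and
      c: "(case w!(m-Suc n) of LP i \<Rightarrow> ((\<forall>x\<in>set (take (m-Suc n) w). \<forall>j. (x = LP j \<or> x = LT j) \<longrightarrow> j-1 \<noteq> i-1) \<longrightarrow> (C[k - 1 := False])!(i-1)) | LT i \<Rightarrow> False)" by auto
    have e: "m - n = Suc (m - Suc n)" using ih by simp
    show ?thesis using ih c unfolding e LT
      by (auto split: lsym.splits simp: nth_list_update_neq)
  qed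
qed

lemma la2: "lock_alphabet 2 = {LP 1, LP 2, LT 1, LT 2}"
  unfolding lock_alphabet_def by (auto simp: le_Suc_eq numeral_2_eq_2)

lemma bt:
  assumes "blocking_type IS w = Some (BP i)" "set w \<subseteq> lock_alphabet 2" "i \<in> {1,2}"
  shows "IS ! (i-1) \<and> (\<exists>u v. w = u @ LP i # v \<and> set u \<subseteq> {LP (3-i), LT (3-i)})"
proof -
  obtain m where m: "stuck_pos IS w 0 = Some m" using assms(1)
    by (auto simp: blocking_type_def split: option.splits)
  have "0 \<le> m \<and> m < length w \<and> (case w!m of LP i \<Rightarrow> ((\<forall>x\<in>set (take m w). \<forall>j. (x = LP j \<or> x = LT j) \<longrightarrow> j-1 \<noteq> i-1) \<longrightarrow> IS!(i-1)) | LT i \<Rightarrow> False)" using sp[OF m] by (simp only: diff_zero)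
  then have l: "m < length w" and c: "(case w!m of LP i \<Rightarrow> ((\<forall>x\<in>set (take m w). \<forall>j. (x = LP j \<or> x = LT j) \<longrightarrow> j-1 \<noteq> i-1) \<longrightarrow> IS!(i-1)) | LT i \<Rightarrow> False)" by blast+
  obtain k where k: "w ! m = LP k" using c by (cases "w!m") auto
  have "Some (BP i) = Some (if (\<forall>x\<in>set (take m w). x \<noteq> LP k \<and> x \<noteq> LT k) then BP k else BPP k)"
    using assms(1) unfolding blocking_type_def m option.case k lsym.case by (rule sym)
  then have ki: "k = i" and nt: "\<forall>x\<in>set (take m w). x \<noteq> LP i \<and> x \<noteq> LT i"
    by (cases "\<forall>x\<in>set (take m w). x \<noteq> LP k \<and> x \<noteq> LT k"; simp)+
  have sub: "set (take m w) \<subseteq> lock_alphabet 2" using set_take_subset assms(2) by (rule subset_trans)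
  have s2: "set (take m w) \<subseteq> {LP (3-i), LT (3-i)}"
  proof
    fix x assume "x \<in> set (take m w)"
    with sub la2 have "x \<in> {LP 1, LP 2, LT 1, LT 2}" by blast
    with nt \<open>x \<in> set (take m w)\<close> assms(3) show "x \<in> {LP (3-i), LT (3-i)}"
      by auto
  qed
  have c2: "(\<forall>x\<in>set (take m w). \<forall>j. (x = LP j \<or> x = LT j) \<longrightarrow> j-1 \<noteq> i-1) \<longrightarrow> IS!(i-1)"
    using c unfolding k ki lsym.case .
  have "\<forall>x\<in>set (take m w). \<forall>j. (x = LP j \<or> x = LT j) \<longrightarrow> j-1 \<noteq> i-1"
  proof (intro ballI allI impI)
    fix x j assume "x \<in> set (take m w)" "x = LP j \<or> x = LT j"
    with s2 have "j = 3 - i" by auto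
    with assms(3) show "j-1 \<noteq> i-1" by auto
  qed
  with c2 have "IS ! (i-1)" by blast
  moreover have "w = take m w @ LP i # drop (Suc m) w"
    using l k ki by (metis Cons_nth_drop_Suc append_take_drop_id)
  ultimately show ?thesis using s2 by blast
qed

theorem lemma5p12:
  fixes IS :: "bool list" and ws wr :: "lsym list"
  assumes "length IS = 2"
    and "correct_translation 2 IS ws wr"
    and "blocking_type IS ws = Some (BP 1)"
    and "blocking_type IS wr = Some (BP 2)"
  shows "IS = [True, True]
    \<and> (\<exists>u v. ws = u @ LP 1 # v \<and> set u \<subseteq> {LP 2, LT 2})
    \<and> (\<exists>u v. wr = u @ LP 2 # v \<and> set u \<subseteq> {LP 1, LT 1})"
proof -
  have a: "set ws \<subseteq> lock_alphabet 2" "set wr \<subseteq> lock_alphabet 2"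
    using assms(2) by (auto simp: correct_translation_def)
  have 1: "IS ! 0 \<and> (\<exists>u v. ws = u @ LP 1 # v \<and> set u \<subseteq> {LP 2, LT 2})"
    using bt[OF assms(3) a(1)] by simp
  have 2: "IS ! 1 \<and> (\<exists>u v. wr = u @ LP 2 # v \<and> set u \<subseteq> {LP 1, LT 1})"
    using bt[OF assms(4) a(2)] by simp
  have "IS = [IS!0, IS!1]" using assms(1)
    by (metis One_nat_def Suc_1 length_0_conv length_Suc_conv nth_Cons_0 nth_Cons_Suc)
  with 1 2 show ?thesis by simp
qed

end
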